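(* Let $(X_j,Y_j,S_j)$, $j\in\mathbb{Z}$, be a FAIM process. Then there exists a non-increasing sequence $\psi(N)$ with $\psi(N)\to1$ as $N\to\infty$ and $\psi(0)<\infty$ such that for all $N>M\ge L\ge1$, \[P_{X_1^L,Y_1^L,X_{M+1}^N,Y_{M+1}^N}\le\psi(M-L)\cdot P_{X_1^L,Y_1^L}\cdot P_{X_{M+1}^N,Y_{M+1}^N}\] (pointwise, for all realizations).
   Context: FAIM process: $(X_j,Y_j,S_j)$, $j\in\mathbb{Z}$, is strictly stationary, $X_j\in\{0,1\}$, $Y_j$ takes values in a finite alphabet, $S_j$ in a finite set $\mathcal{S}$; the conditional law $P_{X_j,Y_j,S_j|S_{j-1}}$ does not depend on $j$; and conditioned on $S_{j-1}$, $\{X_k,Y_k,S_k\}_{k\ge j}$ is independent of $\{X_l,Y_l,S_{l-1}\}_{l<j}$. The state sequence $(S_j)$ is a homogeneous, finite-state, stationary, aperiodic and irreducible Markov chain. *)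

theory Defs
  imports "HOL-Probability.Probability"
begin

(* X_j takes values in {0,1} (modelled as bool), Y_j in a finite type 'y,
   S_j in a finite type 's (the state set \<S> is the whole type 's). *)

definition ev :: "'w measure \<Rightarrow> ('w \<Rightarrow> bool) \<Rightarrow> 'w set" where
  "ev M P = {w \<in> space M. P w}"

(* strict stationarity, expressed via all finite cylinder probabilities
   (all alphabets are finite) *)
definition strictly_stationary ::
  "'w measure \<Rightarrow> (int \<Rightarrow> 'w \<Rightarrow> bool) \<Rightarrow> (int \<Rightarrow> 'w \<Rightarrow> 'y) \<Rightarrow> (int \<Rightarrow> 'w \<Rightarrow> 's) \<Rightarrow> bool" where
  "strictly_stationary M X Y S \<longleftrightarrow>
     (\<forall>k n x y s.
        measure M (ev M (\<lambda>w. \<forall>i<n. X (k + int i) w = x i \<and> Y (k + int i) w = y i \<and> S (k + int i) w = s i))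
      = measure M (ev M (\<lambda>w. \<forall>i<n. X (int i) w = x i \<and> Y (int i) w = y i \<and> S (int i) w = s i)))"

(* the conditional law P_{X_j,Y_j,S_j | S_{j-1}} does not depend on j
   (cross-multiplied form of P(.|S_{j-1}=s') = P(.|S_0=s')) *)
definition time_invariant_kernel ::
  "'w measure \<Rightarrow> (int \<Rightarrow> 'w \<Rightarrow> bool) \<Rightarrow> (int \<Rightarrow> 'w \<Rightarrow> 'y) \<Rightarrow> (int \<Rightarrow> 'w \<Rightarrow> 's) \<Rightarrow> bool" where
  "time_invariant_kernel M X Y S \<longleftrightarrow>
     (\<forall>j s' x y s.
        measure M (ev M (\<lambda>w. X j w = x \<and> Y j w = y \<and> S j w = s \<and> S (j - 1) w = s'))
          * measure M (ev M (\<lambda>w. S 0 w = s'))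
      = measure M (ev M (\<lambda>w. X 1 w = x \<and> Y 1 w = y \<and> S 1 w = s \<and> S 0 w = s'))
          * measure M (ev M (\<lambda>w. S (j - 1) w = s')))"

(* conditioned on S_{j-1}, {X_k,Y_k,S_k}_{k>=j} is independent of {X_l,Y_l,S_{l-1}}_{l<j};
   stated for all finite cylinder events of past and future (finite alphabets) *)
definition state_cond_indep ::
  "'w measure \<Rightarrow> (int \<Rightarrow> 'w \<Rightarrow> bool) \<Rightarrow> (int \<Rightarrow> 'w \<Rightarrow> 'y) \<Rightarrow> (int \<Rightarrow> 'w \<Rightarrow> 's) \<Rightarrow> bool" where
  "state_cond_indep M X Y S \<longleftrightarrow>
     (\<forall>j m n xp yp sp xf yf sf s.
        let A = ev M (\<lambda>w. \<forall>i<m. X (j - 1 - int i) w = xp i \<and> Y (j - 1 - int i) w = yp i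
                                 \<and> S (j - 2 - int i) w = sp i);
            B = ev M (\<lambda>w. \<forall>i<n. X (j + int i) w = xf i \<and> Y (j + int i) w = yf i
                                 \<and> S (j + int i) w = sf i);
            C = ev M (\<lambda>w. S (j - 1) w = s)
        in measure M (A \<inter> B \<inter> C) * measure M C = measure M (A \<inter> C) * measure M (B \<inter> C))"

definition markov_chain_states :: "'w measure \<Rightarrow> (int \<Rightarrow> 'w \<Rightarrow> 's) \<Rightarrow> bool" where
  "markov_chain_states M S \<longleftrightarrow>
     (\<forall>j n sp s t.
        measure M (ev M (\<lambda>w. (\<forall>i<n. S (j - 2 - int i) w = sp i) \<and> S (j - 1) w = s \<and> S j w = t))
          * measure M (ev M (\<lambda>w. S (j - 1) w = s))
      = measure M (ev M (\<lambda>w. (\<forall>i<n. S (j - 2 - int i) w = sp i) \<and> S (j - 1) w = s))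
          * measure M (ev M (\<lambda>w. S (j - 1) w = s \<and> S j w = t)))
   \<and> (\<forall>j s t.
        measure M (ev M (\<lambda>w. S (j - 1) w = s \<and> S j w = t)) * measure M (ev M (\<lambda>w. S 0 w = s))
      = measure M (ev M (\<lambda>w. S 0 w = s \<and> S 1 w = t)) * measure M (ev M (\<lambda>w. S (j - 1) w = s)))
   \<and> (\<forall>j s. measure M (ev M (\<lambda>w. S j w = s)) = measure M (ev M (\<lambda>w. S 0 w = s)))"

definition trans_prob :: "'w measure \<Rightarrow> (int \<Rightarrow> 'w \<Rightarrow> 's) \<Rightarrow> 's \<Rightarrow> 's \<Rightarrow> real" where
  "trans_prob M S s t =
     measure M (ev M (\<lambda>w. S 0 w = s \<and> S 1 w = t)) / measure M (ev M (\<lambda>w. S 0 w = s))"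

fun nstep_prob :: "'w measure \<Rightarrow> (int \<Rightarrow> 'w \<Rightarrow> 's::finite) \<Rightarrow> nat \<Rightarrow> 's \<Rightarrow> 's \<Rightarrow> real" where
  "nstep_prob M S 0 s t = (if s = t then 1 else 0)"
| "nstep_prob M S (Suc n) s t = (\<Sum>u\<in>UNIV. nstep_prob M S n s u * trans_prob M S u t)"

definition irreducible_chain :: "'w measure \<Rightarrow> (int \<Rightarrow> 'w \<Rightarrow> 's::finite) \<Rightarrow> bool" where
  "irreducible_chain M S \<longleftrightarrow> (\<forall>s t. \<exists>n>0. nstep_prob M S n s t > 0)"

definition aperiodic_chain :: "'w measure \<Rightarrow> (int \<Rightarrow> 'w \<Rightarrow> 's::finite) \<Rightarrow> bool" where
  "aperiodic_chain M S \<longleftrightarrow> (\<forall>s. Gcd {n. n > 0 \<and> nstep_prob M S n s s > 0} = 1)"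

definition FAIM ::
  "'w measure \<Rightarrow> (int \<Rightarrow> 'w \<Rightarrow> bool) \<Rightarrow> (int \<Rightarrow> 'w \<Rightarrow> 'y::finite) \<Rightarrow> (int \<Rightarrow> 'w \<Rightarrow> 's::finite) \<Rightarrow> bool" where
  "FAIM M X Y S \<longleftrightarrow>
     prob_space M
   \<and> (\<forall>j. X j \<in> measurable M (count_space UNIV) \<and> Y j \<in> measurable M (count_space UNIV)
          \<and> S j \<in> measurable M (count_space UNIV))
   \<and> strictly_stationary M X Y S
   \<and> time_invariant_kernel M X Y S
   \<and> state_cond_indep M X Y S
   \<and> markov_chain_states M S
   \<and> irreducible_chain M S
   \<and> aperiodic_chain M S"

end

theory Submission
  imports Defs
begin


lemma semigroup_mult_mem:
  assumes cl: "\<And>a b. a \<in> T \<Longrightarrow> b \<in> T \<Longrightarrow> a + b \<in> T" and z: "(0::nat) \<in> T" and a: "a \<in> T"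
  shows "m * a \<in> T"
  by (induction m) (auto simp: z cl a)

lemma numeric_semigroup:
  fixes A :: "nat set"
  assumes pos: "\<And>n. n \<in> A \<Longrightarrow> n > 0"
    and cl: "\<And>a b. a \<in> A \<Longrightarrow> b \<in> A \<Longrightarrow> a + b \<in> A"
    and g: "Gcd A = 1"
  shows "\<exists>N. \<forall>n\<ge>N. n \<in> A"
proof -
  define T where "T = insert 0 A"
  have clT: "a + b \<in> T" if "a \<in> T" "b \<in> T" for a b
    using that cl by (auto simp: T_def)
  have zT: "0 \<in> T" by (simp add: T_def)
  have multT: "m * a \<in> T" if "a \<in> T" for m a
    using semigroup_mult_mem[OF clT zT that] by blast
  define D where "D = {d. d > 0 \<and> (\<exists>q\<in>T. q + d \<in> T)}"
  have "A \<noteq> {}" using g by auto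
  then obtain a0 where a0: "a0 \<in> A" by blast
  have "a0 \<in> D" using a0 pos zT by (auto simp: D_def T_def)
  define gg where "gg = (LEAST d. d \<in> D)"
  have ggD: "gg \<in> D" unfolding gg_def by (rule LeastI) (rule \<open>a0 \<in> D\<close>)
  have ggmin: "\<And>d. d \<in> D \<Longrightarrow> gg \<le> d" unfolding gg_def by (rule Least_le)
  obtain q0 where q0: "q0 \<in> T" "q0 + gg \<in> T" "gg > 0" using ggD by (auto simp: D_def)
  have dv: "gg dvd s" if s: "s \<in> A" for s
  proof (rule ccontr)
    assume nd: "\<not> gg dvd s"
    define q r where "q = s div gg" and "r = s mod gg"
    have sr: "s = q * gg + r" by (simp add: q_def r_def)
    have r0: "r > 0" using nd unfolding r_def by (metis dvd_eq_mod_eq_0 gr0I)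
    have rl: "r < gg" using q0 by (simp add: r_def)
    have e: "q * (q0 + gg) + r = s + q * q0" using sr by (simp add: algebra_simps)
    have "q * (q0 + gg) \<in> T" by (rule multT) (use q0 in auto)
    moreover have "s + q * q0 \<in> T" by (rule clT) (use s q0 multT in \<open>auto simp: T_def\<close>)
    ultimately have "r \<in> D" using r0 e unfolding D_def by (metis (mono_tags, lifting) mem_Collect_eq)
    with ggmin rl show False by fastforce
  qed
  have "gg dvd Gcd A" by (rule Gcd_greatest) (use dv in auto)
  hence gg1: "gg = 1" using g by simp
  show ?thesis
  proof (intro exI allI impI)
    fix n :: nat assume n: "q0 * q0 + 1 \<le> n"
    have "n \<in> T"
    proof (cases "q0 = 0")
      case True
      then have "1 \<in> T" using q0 gg1 by simp
      then show ?thesis using multT[of 1 n] by simp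
    next
      case False
      define aa r where "aa = n div q0" and "r = n mod q0"
      have rl: "r < q0" using False by (simp add: r_def)
      have "q0 * q0 \<le> n" using n by simp
      hence "q0 \<le> aa" using False unfolding aa_def
        by (metis div_le_mono nonzero_mult_div_cancel_left)
      hence e: "n = (aa - r) * q0 + r * (q0 + 1)" using rl
        by (simp add: aa_def r_def algebra_simps)
      show ?thesis using e clT multT q0 gg1 by metis
    qed
    then show "n \<in> A" using n by (auto simp: T_def)
  qed
qed




lemma nstep_CK:
  "nstep_prob M S (a + b) s t = (\<Sum>u\<in>UNIV. nstep_prob M S a s u * nstep_prob M S b u t)"
proof (induction b arbitrary: t)
  case 0
  then show ?case by (simp add: if_distrib cong: if_cong)
next
  case (Suc b)
  have "nstep_prob M S (a + Suc b) s t = (\<Sum>v\<in>UNIV. nstep_prob M S (a + b) s v * trans_prob M S v t)"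
    by simp
  also have "\<dots> = (\<Sum>v\<in>UNIV. \<Sum>u\<in>UNIV. nstep_prob M S a s u * nstep_prob M S b u v * trans_prob M S v t)"
    by (simp add: Suc sum_distrib_right mult.assoc)
  also have "\<dots> = (\<Sum>u\<in>UNIV. \<Sum>v\<in>UNIV. nstep_prob M S a s u * nstep_prob M S b u v * trans_prob M S v t)"
    by (rule sum.swap)
  also have "\<dots> = (\<Sum>u\<in>UNIV. nstep_prob M S a s u * nstep_prob M S (Suc b) u t)"
    by (simp add: sum_distrib_left mult.assoc)
  finally show ?case .
qed

lemma delta_sum: "(\<Sum>u\<in>UNIV. (if (s::'a::finite) = u then 1 else 0) * f u) = (f s :: real)"
proof -
  have "(\<Sum>u\<in>UNIV. (if s = u then 1 else 0) * f u) = (\<Sum>u\<in>UNIV. if s = u then f u else 0)"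
    by (rule sum.cong) auto
  then show ?thesis using sum.delta[of UNIV s f] by simp
qed

lemma nstep_one: "nstep_prob M S 1 s t = trans_prob M S s t"
  by (simp add: delta_sum)

lemma nstep_left: "nstep_prob M S (Suc n) s t = (\<Sum>u\<in>UNIV. trans_prob M S s u * nstep_prob M S n u t)"
  using nstep_CK[of M S 1 n s t] unfolding nstep_one by simp

locale faim =
  fixes M :: "'w measure"
    and X :: "int \<Rightarrow> 'w \<Rightarrow> bool"
    and Y :: "int \<Rightarrow> 'w \<Rightarrow> 'y::finite"
    and S :: "int \<Rightarrow> 'w \<Rightarrow> 's::finite"
  assumes F: "FAIM M X Y S"
begin

lemma ps: "prob_space M" using F by (simp add: FAIM_def)

sublocale prob_space M by (rule ps)

lemma measX[measurable]: "X j \<in> measurable M (count_space UNIV)" using F by (simp add: FAIM_def)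
lemma measY[measurable]: "Y j \<in> measurable M (count_space UNIV)" using F by (simp add: FAIM_def)
lemma measS[measurable]: "S j \<in> measurable M (count_space UNIV)" using F by (simp add: FAIM_def)

abbreviation mu :: "('w \<Rightarrow> bool) \<Rightarrow> real" where "mu P \<equiv> measure M (ev M P)"

definition pi :: "'s \<Rightarrow> real" where "pi s = mu (\<lambda>w. S 0 w = s)"
abbreviation T where "T \<equiv> trans_prob M S"
abbreviation P where "P \<equiv> nstep_prob M S"

lemma mu_cong: "(\<And>w. w \<in> space M \<Longrightarrow> A w = B w) \<Longrightarrow> mu A = mu B"
  unfolding ev_def by (metis (mono_tags, lifting) Collect_cong)

lemma mu_split:
  assumes "finite V" "\<And>w. w \<in> space M \<Longrightarrow> g w \<in> V"
    "\<And>v. v \<in> V \<Longrightarrow> ev M (\<lambda>w. Q w \<and> g w = v) \<in> sets M"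
  shows "mu Q = (\<Sum>v\<in>V. mu (\<lambda>w. Q w \<and> g w = v))"
proof -
  have "ev M Q = (\<Union>v\<in>V. ev M (\<lambda>w. Q w \<and> g w = v))"
    using assms(2) by (auto simp: ev_def)
  moreover have "measure M (\<Union>v\<in>V. ev M (\<lambda>w. Q w \<and> g w = v)) = (\<Sum>v\<in>V. mu (\<lambda>w. Q w \<and> g w = v))"
    by (rule finite_measure_finite_Union) (use assms in \<open>auto simp: disjoint_family_on_def ev_def\<close>)
  ultimately show ?thesis by simp
qed

lemma mu_nonneg: "mu Q \<ge> 0" by simp
lemma mu_le1: "mu Q \<le> 1" by simp

lemma MC: "markov_chain_states M S" using F by (simp add: FAIM_def)

lemma pi_j: "mu (\<lambda>w. S j w = s) = pi s"
  using MC unfolding markov_chain_states_def pi_def by blast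

lemma T_nonneg: "T s t \<ge> 0"
  by (simp add: trans_prob_def)

lemma P_nonneg: "P n s t \<ge> 0"
  by (induction n arbitrary: t) (auto intro!: sum_nonneg mult_nonneg_nonneg T_nonneg)

lemma pi_pos: "pi s > 0"
proof -
  from F have "irreducible_chain M S" by (simp add: FAIM_def)
  then obtain n where n: "n > 0" "P n s s > 0" unfolding irreducible_chain_def by blast
  then obtain n' where n': "n = Suc n'" by (cases n) auto
  show ?thesis
  proof (rule ccontr)
    assume "\<not> pi s > 0"
    hence "pi s = 0" using mu_nonneg[of "\<lambda>w. S 0 w = s"] unfolding pi_def by linarith
    hence "T s u = 0" for u by (simp add: trans_prob_def pi_def[symmetric])
    hence "P n s s = 0" unfolding n' by (subst nstep_left) simp
    with n show False by simp
  qed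
qed

lemma pi_ne0: "pi s \<noteq> 0" using pi_pos[of s] by simp

lemma T_rowsum: "(\<Sum>t\<in>UNIV. T s t) = 1"
proof -
  have "mu (\<lambda>w. S 0 w = s) = (\<Sum>t\<in>UNIV. mu (\<lambda>w. S 0 w = s \<and> S 1 w = t))"
    by (rule mu_split[where g="S 1"]) (auto simp: ev_def)
  then show ?thesis using pi_pos[of s]
    by (simp add: trans_prob_def pi_def[symmetric] sum_divide_distrib[symmetric])
qed

lemma P_rowsum: "(\<Sum>t\<in>UNIV. P n s t) = 1"
proof (induction n arbitrary: s)
  case 0 then show ?case by simp
next
  case (Suc n)
  have "(\<Sum>t\<in>UNIV. P (Suc n) s t) = (\<Sum>t\<in>UNIV. \<Sum>u\<in>UNIV. T s u * P n u t)"
    by (simp only: nstep_left)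
  also have "\<dots> = (\<Sum>u\<in>UNIV. T s u * (\<Sum>t\<in>UNIV. P n u t))"
    by (subst sum.swap) (simp add: sum_distrib_left)
  also have "\<dots> = 1" by (simp add: Suc T_rowsum)
  finally show ?case .
qed

lemma P_le1: "P n s t \<le> 1"
proof -
  have "P n s t \<le> (\<Sum>t\<in>UNIV. P n s t)"
    by (rule member_le_sum) (auto simp: P_nonneg)
  then show ?thesis by (simp add: P_rowsum)
qed

lemma pi_sum: "(\<Sum>s\<in>UNIV. pi s) = 1"
proof -
  have "mu (\<lambda>w. True) = (\<Sum>s\<in>UNIV. mu (\<lambda>w. True \<and> S 0 w = s))"
    by (rule mu_split[where g="S 0"]) (auto simp: ev_def)
  moreover have "mu (\<lambda>w. True) = 1" by (simp add: ev_def prob_space)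
  ultimately show ?thesis by (simp add: pi_def)
qed

lemma pi_le1: "pi s \<le> 1" by (simp add: pi_def)

lemma pi_stat: "(\<Sum>s\<in>UNIV. pi s * T s t) = pi t"
proof -
  have "mu (\<lambda>w. S 1 w = t) = (\<Sum>s\<in>UNIV. mu (\<lambda>w. S 1 w = t \<and> S 0 w = s))"
    by (rule mu_split[where g="S 0"]) (auto simp: ev_def)
  also have "\<dots> = (\<Sum>s\<in>UNIV. mu (\<lambda>w. S 0 w = s \<and> S 1 w = t))"
    by (intro sum.cong refl mu_cong) auto
  finally show ?thesis
    by (simp add: trans_prob_def pi_def[symmetric] pi_j pi_ne0)
qed

lemma pi_statn: "(\<Sum>s\<in>UNIV. pi s * P n s t) = pi t"
proof (induction n arbitrary: t)
  case 0 then show ?case by (simp add: if_distrib cong: if_cong)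
next
  case (Suc n)
  have "(\<Sum>s\<in>UNIV. pi s * P (Suc n) s t) = (\<Sum>s\<in>UNIV. \<Sum>u\<in>UNIV. pi s * P n s u * T u t)"
    by (simp add: sum_distrib_left mult.assoc)
  also have "\<dots> = (\<Sum>u\<in>UNIV. (\<Sum>s\<in>UNIV. pi s * P n s u) * T u t)"
    by (subst sum.swap) (simp add: sum_distrib_right)
  also have "\<dots> = pi t" by (simp add: Suc pi_stat)
  finally show ?case .
qed

end



context faim begin

lemma P_mult_ge: "P (a + b) s t \<ge> P a s u * P b u t"
proof -
  have "P a s u * P b u t \<le> (\<Sum>v\<in>UNIV. P a s v * P b v t)"
    by (rule member_le_sum[where f="\<lambda>v. P a s v * P b v t"]) (auto intro: mult_nonneg_nonneg P_nonneg)
  then show ?thesis by (simp add: nstep_CK)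
qed

lemma aper_eventually: "\<exists>N. \<forall>n\<ge>N. P n s s > 0"
proof -
  from F have "aperiodic_chain M S" by (simp add: FAIM_def)
  hence g: "Gcd {n. n > 0 \<and> P n s s > 0} = 1" unfolding aperiodic_chain_def by blast
  have "\<exists>N. \<forall>n\<ge>N. n \<in> {n. n > 0 \<and> P n s s > 0}"
  proof (rule numeric_semigroup[OF _ _ g])
    fix a b assume "a \<in> {n. n > 0 \<and> P n s s > 0}" "b \<in> {n. n > 0 \<and> P n s s > 0}"
    then have "a + b > 0" "P a s s * P b s s > 0" by auto
    moreover have "P (a + b) s s \<ge> P a s s * P b s s" by (rule P_mult_ge)
    ultimately show "a + b \<in> {n. n > 0 \<and> P n s s > 0}" by auto
  qed auto
  then show ?thesis by auto
qed

lemma primitive: "\<exists>n0>0. \<forall>s t. P n0 s t > 0"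
proof -
  obtain Nf where Nf: "\<And>s n. n \<ge> Nf s \<Longrightarrow> P n s s > 0"
    using aper_eventually by metis
  from F have "irreducible_chain M S" by (simp add: FAIM_def)
  then obtain mf where mf: "\<And>s t. mf s t > 0 \<and> P (mf s t) s t > 0"
    unfolding irreducible_chain_def by metis
  define Na where "Na = (\<Sum>s\<in>UNIV. Nf s)"
  define Ma where "Ma = (\<Sum>s\<in>UNIV. \<Sum>t\<in>UNIV. mf s t)"
  have NaG: "Nf s \<le> Na" for s unfolding Na_def by (rule member_le_sum) auto
  have MaG: "mf s t \<le> Ma" for s t
  proof -
    have "mf s t \<le> (\<Sum>t\<in>UNIV. mf s t)" by (rule member_le_sum) auto
    also have "\<dots> \<le> Ma" unfolding Ma_def by (rule member_le_sum[where f="\<lambda>s. \<Sum>t\<in>UNIV. mf s t"]) auto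
    finally show ?thesis .
  qed
  show ?thesis
  proof (intro exI[of _ "Na + Ma"] conjI allI)
    show "0 < Na + Ma" using mf MaG by (meson add_gr_0 less_le_trans)
    fix s t
    define m where "m = mf s t"
    have e: "Na + Ma = (Na + Ma - m) + m" using MaG[of s t] by (simp add: m_def)
    have "P (Na + Ma - m) s s > 0" by (rule Nf) (use NaG[of s] MaG[of s t] in \<open>simp add: m_def\<close>)
    moreover have "P m s t > 0" using mf by (simp add: m_def)
    ultimately have "P (Na + Ma - m) s s * P m s t > 0" by simp
    also have "\<dots> \<le> P (Na + Ma - m + m) s t" by (rule P_mult_ge)
    finally show "P (Na + Ma) s t > 0" using e by simp
  qed
qed

lemma P_conv: "(\<lambda>k. P k s t) \<longlonglongrightarrow> pi t"
proof -
  obtain n0 where n0: "n0 > 0" "\<And>s t. P n0 s t > 0" using primitive by blast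
  define \<delta> where "\<delta> = Min (range (\<lambda>(s, t). P n0 s t))"
  have dle: "\<delta> \<le> P n0 s t" for s t unfolding \<delta>_def by (rule Min_le) auto
  have dpos: "\<delta> > 0" unfolding \<delta>_def using n0 by (subst Min_gr_iff) auto
  have dle1: "\<delta> \<le> 1" using dle[of s t] P_le1[of n0 s t] by simp
  have bound: "\<bar>P k s t - pi t\<bar> \<le> (1 - \<delta>) ^ (k div n0)" for k s t
  proof (induction k arbitrary: s t rule: less_induct)
    case (less k)
    show ?case
    proof (cases "k < n0")
      case True
      then have "k div n0 = 0" by simp
      moreover have "\<bar>P k s t - pi t\<bar> \<le> 1"
        using P_nonneg[of k s t] P_le1[of k s t] pi_pos[of t] pi_le1[of t] by simp
      ultimately show ?thesis by simp
    next
      case False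
      define r where "r = k - n0"
      have kr: "k = n0 + r" using False by (simp add: r_def)
      have rk: "r < k" using n0 kr by simp
      have dv: "k div n0 = Suc (r div n0)" using n0 kr by simp
      define w where "w u = P n0 s u - \<delta> * pi u" for u
      define g where "g u = P r u t - pi t" for u
      have wnn: "w u \<ge> 0" for u
      proof -
        have "\<delta> * pi u \<le> \<delta> * 1" using pi_le1[of u] dpos by (intro mult_left_mono) auto
        then show ?thesis using dle[of s u] by (simp add: w_def)
      qed
      have wsum: "(\<Sum>u\<in>UNIV. w u) = 1 - \<delta>"
        by (simp add: w_def sum_subtractf sum_distrib_left[symmetric] P_rowsum pi_sum)
      have iden: "P k s t - pi t = (\<Sum>u\<in>UNIV. w u * g u)"
      proof -
        have "(\<Sum>u\<in>UNIV. w u * g u) = (\<Sum>u\<in>UNIV. P n0 s u * P r u t) - pi t * (\<Sum>u\<in>UNIV. P n0 s u)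
              - \<delta> * (\<Sum>u\<in>UNIV. pi u * P r u t) + \<delta> * pi t * (\<Sum>u\<in>UNIV. pi u)"
          by (simp add: w_def g_def algebra_simps sum_subtractf sum.distrib sum_distrib_left sum_distrib_right)
        also have "\<dots> = P k s t - pi t"
          by (simp add: P_rowsum pi_statn pi_sum kr nstep_CK)
        finally show ?thesis by simp
      qed
      have "\<bar>\<Sum>u\<in>UNIV. w u * g u\<bar> \<le> (\<Sum>u\<in>UNIV. w u * (1 - \<delta>) ^ (r div n0))"
      proof -
        have "\<bar>\<Sum>u\<in>UNIV. w u * g u\<bar> \<le> (\<Sum>u\<in>UNIV. \<bar>w u * g u\<bar>)" by (rule sum_abs)
        also have "\<dots> \<le> (\<Sum>u\<in>UNIV. w u * (1 - \<delta>) ^ (r div n0))"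
        proof (rule sum_mono)
          fix u
          have "\<bar>g u\<bar> \<le> (1 - \<delta>) ^ (r div n0)" unfolding g_def by (rule less.IH[OF rk])
          then show "\<bar>w u * g u\<bar> \<le> w u * (1 - \<delta>) ^ (r div n0)"
            using wnn[of u] by (simp add: abs_mult mult_left_mono)
        qed
        finally show ?thesis .
      qed
      also have "\<dots> = (1 - \<delta>) * (1 - \<delta>) ^ (r div n0)"
        by (simp add: sum_distrib_right[symmetric] wsum)
      finally show ?thesis using iden dv by simp
    qed
  qed
  have lim0: "(\<lambda>k. (1 - \<delta>) ^ (k div n0)) \<longlonglongrightarrow> 0"
    by (rule filterlim_compose[OF LIMSEQ_power_zero filterlim_at_top_div_const_nat])
       (use dpos dle1 n0 in auto)
  have "(\<lambda>k. P k s t - pi t) \<longlonglongrightarrow> 0"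
    by (rule Lim_null_comparison[OF _ lim0]) (use bound in simp)
  then show ?thesis by (simp add: LIM_zero_iff)
qed

definition psi :: "nat \<Rightarrow> real" where
  "psi k = Max (range (\<lambda>(s, t). P k s t / pi t))"

lemma psi_ge: "P k s t / pi t \<le> psi k"
  unfolding psi_def by (rule Max_ge) auto

lemma psi_bound: "P k s t \<le> psi k * pi t"
  using psi_ge[of k s t] pi_pos[of t] by (simp add: divide_le_eq)

lemma psi_anti: "antimono psi"
proof -
  have "psi (Suc k) \<le> psi k" for k
    unfolding psi_def[of "Suc k"]
  proof (subst Max_le_iff, simp, simp, clarify)
    fix s t
    have "P (Suc k) s t = (\<Sum>u\<in>UNIV. T s u * P k u t)" by (rule nstep_left)
    also have "\<dots> \<le> (\<Sum>u\<in>UNIV. T s u * (psi k * pi t))"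
      by (intro sum_mono mult_left_mono psi_bound T_nonneg)
    also have "\<dots> = psi k * pi t" by (simp add: sum_distrib_right[symmetric] T_rowsum)
    finally show "P (Suc k) s t / pi t \<le> psi k" using pi_pos[of t] by (simp add: divide_le_eq)
  qed
  then show ?thesis by (simp add: decseq_Suc_iff)
qed

lemma psi_lim: "psi \<longlonglongrightarrow> 1"
proof -
  have rat: "(\<lambda>k. P k s t / pi t) \<longlonglongrightarrow> 1" for s t
  proof -
    have "(\<lambda>k. P k s t / pi t) \<longlonglongrightarrow> pi t / pi t"
      by (intro tendsto_divide P_conv tendsto_const) (simp add: pi_ne0)
    then show ?thesis by (simp add: pi_ne0)
  qed
  define U where "U k = 1 + (\<Sum>s\<in>UNIV. \<Sum>t\<in>UNIV. \<bar>P k s t / pi t - 1\<bar>)" for k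
  obtain s0 :: 's where True by blast
  have low: "P k s0 s0 / pi s0 \<le> psi k" for k by (rule psi_ge)
  have up: "psi k \<le> U k" for k
    unfolding psi_def
  proof (subst Max_le_iff, simp, simp, clarify)
    fix s t
    have "\<bar>P k s t / pi t - 1\<bar> \<le> (\<Sum>t\<in>UNIV. \<bar>P k s t / pi t - 1\<bar>)"
      by (rule member_le_sum[where f="\<lambda>t. \<bar>P k s t / pi t - 1\<bar>"]) auto
    also have "\<dots> \<le> (\<Sum>s\<in>UNIV. \<Sum>t\<in>UNIV. \<bar>P k s t / pi t - 1\<bar>)"
      by (rule member_le_sum[where f="\<lambda>s. \<Sum>t\<in>UNIV. \<bar>P k s t / pi t - 1\<bar>"]) auto
    finally show "P k s t / pi t \<le> U k" unfolding U_def by linarith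
  qed
  have "U \<longlonglongrightarrow> 1 + (\<Sum>s\<in>(UNIV::'s set). \<Sum>t\<in>(UNIV::'s set). \<bar>(1::real) - 1\<bar>)"
    unfolding U_def
    apply (rule tendsto_add[OF tendsto_const])
    apply (rule tendsto_sum)
    apply (rule tendsto_sum)
    apply (rule tendsto_rabs)
    apply (rule tendsto_diff[OF rat tendsto_const])
    done
  hence Ul: "U \<longlonglongrightarrow> 1" by simp
  show ?thesis
    by (rule tendsto_sandwich[OF _ _ rat[of s0 s0] Ul]) (use low up in auto)
qed

end



lemma restrict_eq_PiE: "v \<in> PiE I (\<lambda>_. UNIV) \<Longrightarrow> (restrict f I = v) \<longleftrightarrow> (\<forall>i\<in>I. f i = v i)"
  by (auto simp: PiE_def extensional_def fun_eq_iff)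

context faim begin

lemma ev_and: "ev M (\<lambda>w. A w \<and> B w) = ev M A \<inter> ev M B"
  by (auto simp: ev_def)

lemma ev_fin:
  assumes "finite V" "\<And>w. w \<in> space M \<Longrightarrow> g w \<in> V" "\<And>v. v \<in> V \<Longrightarrow> ev M (\<lambda>w. g w = v) \<in> sets M"
  shows "ev M (\<lambda>w. R (g w)) \<in> sets M"
proof -
  have "ev M (\<lambda>w. R (g w)) = (\<Union>v\<in>{v\<in>V. R v}. ev M (\<lambda>w. g w = v))"
    using assms(2) by (auto simp: ev_def)
  also have "\<dots> \<in> sets M" using assms by (intro sets.finite_UN) auto
  finally show ?thesis .
qed

lemma split_R:
  assumes V: "finite V" "\<And>w. w \<in> space M \<Longrightarrow> g w \<in> V" "\<And>v. v \<in> V \<Longrightarrow> ev M (\<lambda>w. g w = v) \<in> sets M"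
    and Z: "ev M Z \<in> sets M"
  shows "mu (\<lambda>w. R (g w) \<and> Z w) = (\<Sum>v\<in>V. if R v then mu (\<lambda>w. g w = v \<and> Z w) else 0)"
proof -
  have "mu (\<lambda>w. R (g w) \<and> Z w) = (\<Sum>v\<in>V. mu (\<lambda>w. (R (g w) \<and> Z w) \<and> g w = v))"
  proof (rule mu_split[OF V(1,2)])
    fix v assume "v \<in> V"
    then show "ev M (\<lambda>w. (R (g w) \<and> Z w) \<and> g w = v) \<in> sets M"
      unfolding ev_and using ev_fin[OF V, of R] Z V(3) by auto
  qed
  also have "\<dots> = (\<Sum>v\<in>V. if R v then mu (\<lambda>w. g w = v \<and> Z w) else 0)"
  proof (rule sum.cong[OF refl])
    fix v assume "v \<in> V"
    show "mu (\<lambda>w. (R (g w) \<and> Z w) \<and> g w = v) = (if R v then mu (\<lambda>w. g w = v \<and> Z w) else 0)"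
    proof (cases "R v")
      case True then show ?thesis by (simp, intro mu_cong) auto
    next
      case False
      then have "ev M (\<lambda>w. (R (g w) \<and> Z w) \<and> g w = v) = {}" by (auto simp: ev_def)
      then show ?thesis using False by simp
    qed
  qed
  finally show ?thesis .
qed

definition pv :: "nat \<Rightarrow> int \<Rightarrow> 'w \<Rightarrow> nat \<Rightarrow> bool \<times> 'y \<times> 's" where
  "pv m j w = (\<lambda>i\<in>{..<m}. (X (j - 1 - int i) w, Y (j - 1 - int i) w, S (j - 2 - int i) w))"
definition fv :: "nat \<Rightarrow> int \<Rightarrow> 'w \<Rightarrow> nat \<Rightarrow> bool \<times> 'y \<times> 's" where
  "fv n j w = (\<lambda>i\<in>{..<n}. (X (j + int i) w, Y (j + int i) w, S (j + int i) w))"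
definition sv :: "nat \<Rightarrow> int \<Rightarrow> 'w \<Rightarrow> nat \<Rightarrow> 's" where
  "sv n j w = (\<lambda>i\<in>{..<n}. S (j - 2 - int i) w)"

lemma pv_eq: "v \<in> PiE {..<m} (\<lambda>_. UNIV) \<Longrightarrow> (pv m j w = v) \<longleftrightarrow>
   (\<forall>i<m. X (j - 1 - int i) w = fst (v i) \<and> Y (j - 1 - int i) w = fst (snd (v i)) \<and> S (j - 2 - int i) w = snd (snd (v i)))"
  unfolding pv_def by (subst restrict_eq_PiE) (auto simp: prod_eq_iff)
lemma fv_eq: "v \<in> PiE {..<n} (\<lambda>_. UNIV) \<Longrightarrow> (fv n j w = v) \<longleftrightarrow>
   (\<forall>i<n. X (j + int i) w = fst (v i) \<and> Y (j + int i) w = fst (snd (v i)) \<and> S (j + int i) w = snd (snd (v i)))"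
  unfolding fv_def by (subst restrict_eq_PiE) (auto simp: prod_eq_iff)
lemma sv_eq: "v \<in> PiE {..<n} (\<lambda>_. UNIV) \<Longrightarrow> (sv n j w = v) \<longleftrightarrow> (\<forall>i<n. S (j - 2 - int i) w = v i)"
  unfolding sv_def by (subst restrict_eq_PiE) auto

lemma pv_V: "finite (PiE {..<m} (\<lambda>_. UNIV :: (bool \<times> 'y \<times> 's) set))" "pv m j w \<in> PiE {..<m} (\<lambda>_. UNIV)"
  "v \<in> PiE {..<m} (\<lambda>_. UNIV) \<Longrightarrow> ev M (\<lambda>w. pv m j w = v) \<in> sets M"
proof -
  show "finite (PiE {..<m} (\<lambda>_. UNIV :: (bool \<times> 'y \<times> 's) set))" by (intro finite_PiE) auto
  show "pv m j w \<in> PiE {..<m} (\<lambda>_. UNIV)" by (auto simp: pv_def)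
  assume v: "v \<in> PiE {..<m} (\<lambda>_. UNIV)"
  have "ev M (\<lambda>w. pv m j w = v) = ev M (\<lambda>w. \<forall>i<m. X (j - 1 - int i) w = fst (v i) \<and> Y (j - 1 - int i) w = fst (snd (v i)) \<and> S (j - 2 - int i) w = snd (snd (v i)))"
    using pv_eq[OF v] by (simp add: ev_def)
  also have "\<dots> \<in> sets M" unfolding ev_def by measurable
  finally show "ev M (\<lambda>w. pv m j w = v) \<in> sets M" .
qed

lemma fv_V: "finite (PiE {..<n} (\<lambda>_. UNIV :: (bool \<times> 'y \<times> 's) set))" "fv n j w \<in> PiE {..<n} (\<lambda>_. UNIV)"
  "v \<in> PiE {..<n} (\<lambda>_. UNIV) \<Longrightarrow> ev M (\<lambda>w. fv n j w = v) \<in> sets M"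
proof -
  show "finite (PiE {..<n} (\<lambda>_. UNIV :: (bool \<times> 'y \<times> 's) set))" by (intro finite_PiE) auto
  show "fv n j w \<in> PiE {..<n} (\<lambda>_. UNIV)" by (auto simp: fv_def)
  assume v: "v \<in> PiE {..<n} (\<lambda>_. UNIV)"
  have "ev M (\<lambda>w. fv n j w = v) = ev M (\<lambda>w. \<forall>i<n. X (j + int i) w = fst (v i) \<and> Y (j + int i) w = fst (snd (v i)) \<and> S (j + int i) w = snd (snd (v i)))"
    using fv_eq[OF v] by (simp add: ev_def)
  also have "\<dots> \<in> sets M" unfolding ev_def by measurable
  finally show "ev M (\<lambda>w. fv n j w = v) \<in> sets M" .
qed

lemma sv_V: "finite (PiE {..<n} (\<lambda>_. UNIV :: 's set))" "sv n j w \<in> PiE {..<n} (\<lambda>_. UNIV)"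
  "v \<in> PiE {..<n} (\<lambda>_. UNIV) \<Longrightarrow> ev M (\<lambda>w. sv n j w = v) \<in> sets M"
proof -
  show "finite (PiE {..<n} (\<lambda>_. UNIV :: 's set))" by (intro finite_PiE) auto
  show "sv n j w \<in> PiE {..<n} (\<lambda>_. UNIV)" by (auto simp: sv_def)
  assume v: "v \<in> PiE {..<n} (\<lambda>_. UNIV)"
  have "ev M (\<lambda>w. sv n j w = v) = ev M (\<lambda>w. \<forall>i<n. S (j - 2 - int i) w = v i)"
    using sv_eq[OF v] by (simp add: ev_def)
  also have "\<dots> \<in> sets M" unfolding ev_def by measurable
  finally show "ev M (\<lambda>w. sv n j w = v) \<in> sets M" .
qed

lemma evS[simp]: "ev M (\<lambda>w. S j w = s) \<in> sets M" unfolding ev_def by measurable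
lemma evSS[simp]: "ev M (\<lambda>w. S j w = s \<and> S j' w = t) \<in> sets M" unfolding ev_def by measurable

lemma pvR: "ev M (\<lambda>w. R (pv m j w)) \<in> sets M" by (rule ev_fin[OF pv_V])
lemma fvR: "ev M (\<lambda>w. R (fv m j w)) \<in> sets M" by (rule ev_fin[OF fv_V])
lemma svR: "ev M (\<lambda>w. R (sv m j w)) \<in> sets M" by (rule ev_fin[OF sv_V])

lemma CI_cyl:
  assumes p: "p \<in> PiE {..<m} (\<lambda>_. UNIV)" and f: "f \<in> PiE {..<n} (\<lambda>_. UNIV)"
  shows "mu (\<lambda>w. fv n j w = f \<and> pv m j w = p \<and> S (j - 1) w = s) * mu (\<lambda>w. S (j - 1) w = s)
       = mu (\<lambda>w. pv m j w = p \<and> S (j - 1) w = s) * mu (\<lambda>w. fv n j w = f \<and> S (j - 1) w = s)"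
proof -
  from F have ci: "state_cond_indep M X Y S" by (simp add: FAIM_def)
  define xp where "xp i = fst (p i)" for i
  define yp where "yp i = fst (snd (p i))" for i
  define sp where "sp i = snd (snd (p i))" for i
  define xf where "xf i = fst (f i)" for i
  define yf where "yf i = fst (snd (f i))" for i
  define sf where "sf i = snd (snd (f i))" for i
  have "let A = ev M (\<lambda>w. \<forall>i<m. X (j - 1 - int i) w = xp i \<and> Y (j - 1 - int i) w = yp i
                                 \<and> S (j - 2 - int i) w = sp i);
            B = ev M (\<lambda>w. \<forall>i<n. X (j + int i) w = xf i \<and> Y (j + int i) w = yf i
                                 \<and> S (j + int i) w = sf i);
            C = ev M (\<lambda>w. S (j - 1) w = s)
        in measure M (A \<inter> B \<inter> C) * measure M C = measure M (A \<inter> C) * measure M (B \<inter> C)"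
    using ci unfolding state_cond_indep_def by blast
  then have e: "measure M (ev M (\<lambda>w. pv m j w = p) \<inter> ev M (\<lambda>w. fv n j w = f) \<inter> ev M (\<lambda>w. S (j - 1) w = s)) * mu (\<lambda>w. S (j - 1) w = s)
     = measure M (ev M (\<lambda>w. pv m j w = p) \<inter> ev M (\<lambda>w. S (j - 1) w = s)) * measure M (ev M (\<lambda>w. fv n j w = f) \<inter> ev M (\<lambda>w. S (j - 1) w = s))"
    unfolding Let_def using pv_eq[OF p] fv_eq[OF f] xp_def yp_def sp_def xf_def yf_def sf_def
    by (simp add: ev_def)
  show ?thesis using e unfolding ev_and[symmetric] by (simp add: conj_commute conj_left_commute)
qed

lemma CI_gen:
  "mu (\<lambda>w. RP (pv m j w) \<and> RQ (fv n j w) \<and> S (j - 1) w = s) * mu (\<lambda>w. S (j - 1) w = s)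
   = mu (\<lambda>w. RP (pv m j w) \<and> S (j - 1) w = s) * mu (\<lambda>w. RQ (fv n j w) \<and> S (j - 1) w = s)"
proof -
  let ?VP = "PiE {..<m} (\<lambda>_. UNIV :: (bool \<times> 'y \<times> 's) set)"
  let ?VF = "PiE {..<n} (\<lambda>_. UNIV :: (bool \<times> 'y \<times> 's) set)"
  let ?C = "\<lambda>w. S (j - 1) w = s"
  have a: "mu (\<lambda>w. RP (pv m j w) \<and> RQ (fv n j w) \<and> ?C w)
     = (\<Sum>p\<in>?VP. if RP p then mu (\<lambda>w. pv m j w = p \<and> RQ (fv n j w) \<and> ?C w) else 0)"
  proof (rule split_R[OF pv_V])
    show "ev M (\<lambda>w. RQ (fv n j w) \<and> ?C w) \<in> sets M" unfolding ev_and by (intro sets.Int fvR evS)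
  qed auto
  have b: "mu (\<lambda>w. pv m j w = p \<and> RQ (fv n j w) \<and> ?C w)
     = (\<Sum>f\<in>?VF. if RQ f then mu (\<lambda>w. fv n j w = f \<and> pv m j w = p \<and> ?C w) else 0)" for p
  proof -
    have "mu (\<lambda>w. pv m j w = p \<and> RQ (fv n j w) \<and> ?C w) = mu (\<lambda>w. RQ (fv n j w) \<and> (pv m j w = p \<and> ?C w))"
      by (rule mu_cong) auto
    also have "\<dots> = (\<Sum>f\<in>?VF. if RQ f then mu (\<lambda>w. fv n j w = f \<and> pv m j w = p \<and> ?C w) else 0)"
    proof (rule split_R[OF fv_V])
      show "ev M (\<lambda>w. pv m j w = p \<and> ?C w) \<in> sets M" unfolding ev_and by (intro sets.Int pvR evS)
    qed auto
    finally show ?thesis .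
  qed
  have c: "mu (\<lambda>w. RP (pv m j w) \<and> ?C w) = (\<Sum>p\<in>?VP. if RP p then mu (\<lambda>w. pv m j w = p \<and> ?C w) else 0)"
    by (rule split_R[OF pv_V]) auto
  have d: "mu (\<lambda>w. RQ (fv n j w) \<and> ?C w) = (\<Sum>f\<in>?VF. if RQ f then mu (\<lambda>w. fv n j w = f \<and> ?C w) else 0)"
    by (rule split_R[OF fv_V]) auto
  have "mu (\<lambda>w. RP (pv m j w) \<and> RQ (fv n j w) \<and> ?C w) * mu ?C
      = (\<Sum>p\<in>?VP. \<Sum>f\<in>?VF. if RP p then (if RQ f then mu (\<lambda>w. fv n j w = f \<and> pv m j w = p \<and> ?C w) * mu ?C else 0) else 0)"
    unfolding a b sum_distrib_right
  proof (intro sum.cong refl)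
    fix p
    show "(if RP p then \<Sum>f\<in>?VF. if RQ f then mu (\<lambda>w. fv n j w = f \<and> pv m j w = p \<and> ?C w) else 0 else 0) * mu ?C
      = (\<Sum>f\<in>?VF. if RP p then (if RQ f then mu (\<lambda>w. fv n j w = f \<and> pv m j w = p \<and> ?C w) * mu ?C else 0) else 0)"
      apply (cases "RP p")
       apply (simp_all add: sum_distrib_right)
      apply (rule sum.cong)
       apply auto
      done
  qed
  also have "\<dots> = (\<Sum>p\<in>?VP. \<Sum>f\<in>?VF. (if RP p then mu (\<lambda>w. pv m j w = p \<and> ?C w) else 0) * (if RQ f then mu (\<lambda>w. fv n j w = f \<and> ?C w) else 0))"
    by (intro sum.cong refl) (simp add: CI_cyl)
  also have "\<dots> = mu (\<lambda>w. RP (pv m j w) \<and> ?C w) * mu (\<lambda>w. RQ (fv n j w) \<and> ?C w)"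
    unfolding c d by (simp add: sum_product)
  finally show ?thesis .
qed

end



lemma reidx1: "(\<forall>i\<in>{1..int L}. \<Phi> i) \<longleftrightarrow> (\<forall>i<L. \<Phi> (int L - int i))"
proof
  assume h: "\<forall>i\<in>{1..int L}. \<Phi> i"
  show "\<forall>i<L. \<Phi> (int L - int i)"
  proof (intro allI impI)
    fix i assume "i < L" then show "\<Phi> (int L - int i)" using h by auto
  qed
next
  assume h: "\<forall>i<L. \<Phi> (int L - int i)"
  show "\<forall>i\<in>{1..int L}. \<Phi> i"
  proof
    fix i assume i: "i \<in> {1..int L}"
    have "nat (int L - i) < L" using i by auto
    with h have "\<Phi> (int L - int (nat (int L - i)))" by blast
    moreover have "int L - int (nat (int L - i)) = i" using i by auto
    ultimately show "\<Phi> i" by simp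
  qed
qed

lemma reidx2:
  assumes "j \<le> a" "b = j + int n - 1"
  shows "(\<forall>i\<in>{a..b}. \<Phi> i) \<longleftrightarrow> (\<forall>i<n. a \<le> j + int i \<longrightarrow> \<Phi> (j + int i))"
proof
  assume h: "\<forall>i\<in>{a..b}. \<Phi> i"
  show "\<forall>i<n. a \<le> j + int i \<longrightarrow> \<Phi> (j + int i)"
    using h assms by auto
next
  assume h: "\<forall>i<n. a \<le> j + int i \<longrightarrow> \<Phi> (j + int i)"
  show "\<forall>i\<in>{a..b}. \<Phi> i"
  proof
    fix i assume i: "i \<in> {a..b}"
    have "nat (i - j) < n" "a \<le> j + int (nat (i - j))" using i assms by auto
    with h have "\<Phi> (j + int (nat (i - j)))" by blast
    moreover have "j + int (nat (i - j)) = i" using i assms by auto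
    ultimately show "\<Phi> i" by simp
  qed
qed

context faim begin

lemma markov_cyl:
  assumes v: "v \<in> PiE {..<n} (\<lambda>_. UNIV)"
  shows "mu (\<lambda>w. sv n j w = v \<and> S (j - 1) w = u \<and> S j w = t) * pi u
       = mu (\<lambda>w. sv n j w = v \<and> S (j - 1) w = u) * mu (\<lambda>w. S (j - 1) w = u \<and> S j w = t)"
proof -
  have "mu (\<lambda>w. (\<forall>i<n. S (j - 2 - int i) w = v i) \<and> S (j - 1) w = u \<and> S j w = t)
          * mu (\<lambda>w. S (j - 1) w = u)
      = mu (\<lambda>w. (\<forall>i<n. S (j - 2 - int i) w = v i) \<and> S (j - 1) w = u)
          * mu (\<lambda>w. S (j - 1) w = u \<and> S j w = t)"
    using MC unfolding markov_chain_states_def by blast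
  then show ?thesis using sv_eq[OF v] by (simp add: pi_j)
qed

lemma markov_gen:
  "mu (\<lambda>w. R (sv n j w) \<and> S (j - 1) w = u \<and> S j w = t) * pi u
   = mu (\<lambda>w. R (sv n j w) \<and> S (j - 1) w = u) * mu (\<lambda>w. S (j - 1) w = u \<and> S j w = t)"
proof -
  let ?V = "PiE {..<n} (\<lambda>_. UNIV :: 's set)"
  have a: "mu (\<lambda>w. R (sv n j w) \<and> (S (j - 1) w = u \<and> S j w = t))
     = (\<Sum>v\<in>?V. if R v then mu (\<lambda>w. sv n j w = v \<and> (S (j - 1) w = u \<and> S j w = t)) else 0)"
    by (rule split_R[OF sv_V]) auto
  have b: "mu (\<lambda>w. R (sv n j w) \<and> S (j - 1) w = u)
     = (\<Sum>v\<in>?V. if R v then mu (\<lambda>w. sv n j w = v \<and> S (j - 1) w = u) else 0)"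
    by (rule split_R[OF sv_V]) auto
  show ?thesis
    unfolding a b sum_distrib_right
    by (intro sum.cong refl) (simp add: markov_cyl)
qed

lemma pair: "mu (\<lambda>w. S (j - 1) w = u \<and> S j w = t) = pi u * T u t"
proof -
  have "mu (\<lambda>w. S (j - 1) w = u \<and> S j w = t) * mu (\<lambda>w. S 0 w = u)
      = mu (\<lambda>w. S 0 w = u \<and> S 1 w = t) * mu (\<lambda>w. S (j - 1) w = u)"
    using MC unfolding markov_chain_states_def by blast
  then have "mu (\<lambda>w. S (j - 1) w = u \<and> S j w = t) * pi u = mu (\<lambda>w. S 0 w = u \<and> S 1 w = t) * pi u"
    by (simp add: pi_j pi_def[symmetric])
  then have "mu (\<lambda>w. S (j - 1) w = u \<and> S j w = t) = mu (\<lambda>w. S 0 w = u \<and> S 1 w = t)"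
    using pi_ne0 by simp
  then show ?thesis by (simp add: trans_prob_def pi_def[symmetric] pi_ne0)
qed

lemma qlem: "mu (\<lambda>w. S (int L) w = s \<and> S (int L + int k) w = t) = pi s * P k s t"
proof (induction k arbitrary: t)
  case 0
  show ?case
  proof (cases "s = t")
    case True
    then show ?thesis by (simp add: pi_j)
  next
    case False
    then have "ev M (\<lambda>w. S (int L) w = s \<and> S (int L + int 0) w = t) = {}" by (auto simp: ev_def)
    then show ?thesis using False by simp
  qed
next
  case (Suc k)
  show ?case
  proof (cases "k = 0")
    case True
    have "mu (\<lambda>w. S (int L) w = s \<and> S (int L + int (Suc k)) w = t)
        = mu (\<lambda>w. S ((int L + 1) - 1) w = s \<and> S (int L + 1) w = t)"
      using True by (intro mu_cong) auto
    also have "\<dots> = pi s * T s t" by (rule pair)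
    finally show ?thesis using True by (simp add: nstep_one[simplified])
  next
    case False
    define j where "j = int L + int k + 1"
    have "mu (\<lambda>w. S (int L) w = s \<and> S (int L + int (Suc k)) w = t)
        = (\<Sum>u\<in>UNIV. mu (\<lambda>w. (S (int L) w = s \<and> S (int L + int (Suc k)) w = t) \<and> S (j - 1) w = u))"
      by (rule mu_split[where g="S (j - 1)"]) (auto simp: ev_def)
    also have "\<dots> = (\<Sum>u\<in>UNIV. pi s * P k s u * T u t)"
    proof (rule sum.cong[OF refl])
      fix u
      have e1: "mu (\<lambda>w. (S (int L) w = s \<and> S (int L + int (Suc k)) w = t) \<and> S (j - 1) w = u)
          = mu (\<lambda>w. (\<lambda>v. v (k - 1) = s) (sv k j w) \<and> S (j - 1) w = u \<and> S j w = t)"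
        using False by (intro mu_cong) (auto simp: sv_def j_def of_nat_diff add.assoc add.commute[of 1])
      have e2: "mu (\<lambda>w. (\<lambda>v. v (k - 1) = s) (sv k j w) \<and> S (j - 1) w = u)
          = mu (\<lambda>w. S (int L) w = s \<and> S (int L + int k) w = u)"
        using False by (intro mu_cong) (auto simp: sv_def j_def of_nat_diff)
      have "mu (\<lambda>w. (\<lambda>v. v (k - 1) = s) (sv k j w) \<and> S (j - 1) w = u \<and> S j w = t) * pi u
          = (pi s * P k s u) * (pi u * T u t)"
        using markov_gen[of "\<lambda>v. v (k - 1) = s" k j u t] e2 Suc.IH pair by (simp add: mult.assoc)
      then show "mu (\<lambda>w. (S (int L) w = s \<and> S (int L + int (Suc k)) w = t) \<and> S (j - 1) w = u)
          = pi s * P k s u * T u t"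
        unfolding e1 using pi_ne0[of u] by (simp add: field_simps)
    qed
    also have "\<dots> = pi s * P (Suc k) s t"
      by (simp add: sum_distrib_left mult.assoc)
    finally show ?thesis .
  qed
qed


lemma psi_nonneg: "psi k \<ge> 0"
proof -
  have "0 \<le> P k s t / pi t" for s t by (intro divide_nonneg_pos P_nonneg pi_pos)
  then show ?thesis using psi_ge order_trans by blast
qed

definition RA :: "nat \<Rightarrow> (int \<Rightarrow> bool) \<Rightarrow> (int \<Rightarrow> 'y) \<Rightarrow> (nat \<Rightarrow> bool \<times> 'y \<times> 's) \<Rightarrow> bool" where
  "RA L x y p \<longleftrightarrow> (\<forall>i<L. fst (p i) = x (int L - int i) \<and> fst (snd (p i)) = y (int L - int i))"

lemma Akey: "(\<forall>i\<in>{1..int L}. X i w = x i \<and> Y i w = y i) \<longleftrightarrow> RA L x y (pv L (int L + 1) w)"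
  unfolding RA_def pv_def reidx1 by auto

definition RF :: "int \<Rightarrow> int \<Rightarrow> nat \<Rightarrow> (int \<Rightarrow> bool) \<Rightarrow> (int \<Rightarrow> 'y) \<Rightarrow> (nat \<Rightarrow> bool \<times> 'y \<times> 's) \<Rightarrow> bool" where
  "RF j a n x y f \<longleftrightarrow> (\<forall>i<n. a \<le> j + int i \<longrightarrow> fst (f i) = x (j + int i) \<and> fst (snd (f i)) = y (j + int i))"

lemma Fkey:
  assumes "j \<le> a" "b = j + int n - 1"
  shows "(\<forall>i\<in>{a..b}. X i w = x i \<and> Y i w = y i) \<longleftrightarrow> RF j a n x y (fv n j w)"
  unfolding RF_def fv_def reidx2[OF assms] by auto

lemma sumA: "mu A = (\<Sum>s\<in>UNIV. mu (\<lambda>w. A w \<and> S j w = s))"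
  if "\<And>s. ev M (\<lambda>w. A w \<and> S j w = s) \<in> sets M"
  by (rule mu_split[where g="S j"]) (use that in auto)

lemma main_gt:
  fixes x :: "int \<Rightarrow> bool" and y :: "int \<Rightarrow> 'y"
  assumes LM: "1 \<le> L" "L < M'" "M' < N"
  defines "A \<equiv> \<lambda>w. \<forall>i\<in>{1..int L}. X i w = x i \<and> Y i w = y i"
    and "B \<equiv> \<lambda>w. \<forall>i\<in>{int M' + 1..int N}. X i w = x i \<and> Y i w = y i"
  shows "mu (\<lambda>w. A w \<and> B w) \<le> psi (M' - L) * mu A * mu B"
proof -
  define k where "k = M' - L"
  have Mk: "int M' = int L + int k" using LM by (simp add: k_def)
  define a where "a s = mu (\<lambda>w. A w \<and> S (int L) w = s)" for s
  define b where "b t = mu (\<lambda>w. S (int M') w = t \<and> B w)" for t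
  define E where "E s t = mu (\<lambda>w. A w \<and> S (int L) w = s \<and> S (int M') w = t \<and> B w)" for s t
  have mA: "ev M (\<lambda>w. A w \<and> S j w = s) \<in> sets M" for j s unfolding A_def ev_def by measurable
  have mB: "ev M (\<lambda>w. B w \<and> S j w = s) \<in> sets M" for j s unfolding B_def ev_def by measurable
  have mAB: "ev M (\<lambda>w. (A w \<and> B w) \<and> S j w = s) \<in> sets M" for j s unfolding A_def B_def ev_def by measurable
  have mABS: "ev M (\<lambda>w. ((A w \<and> B w) \<and> S j w = s) \<and> S j' w = t) \<in> sets M" for j j' s t
    unfolding A_def B_def ev_def by measurable
  have sa: "mu A = (\<Sum>s\<in>UNIV. a s)" unfolding a_def by (rule sumA[OF mA])
  have sb: "mu B = (\<Sum>t\<in>UNIV. b t)"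
    unfolding b_def sumA[OF mB, of "int M'"] by (intro sum.cong refl mu_cong) auto
  have sab: "mu (\<lambda>w. A w \<and> B w) = (\<Sum>s\<in>UNIV. \<Sum>t\<in>UNIV. E s t)"
  proof -
    have "mu (\<lambda>w. A w \<and> B w) = (\<Sum>s\<in>UNIV. mu (\<lambda>w. (A w \<and> B w) \<and> S (int L) w = s))"
      by (rule sumA[OF mAB])
    also have "\<dots> = (\<Sum>s\<in>UNIV. \<Sum>t\<in>UNIV. mu (\<lambda>w. ((A w \<and> B w) \<and> S (int L) w = s) \<and> S (int M') w = t))"
      by (intro sum.cong refl sumA mABS)
    also have "\<dots> = (\<Sum>s\<in>UNIV. \<Sum>t\<in>UNIV. E s t)"
      unfolding E_def by (intro sum.cong refl mu_cong) auto
    finally show ?thesis .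
  qed
  have Ebound: "E s t \<le> psi k * (a s * b t)" for s t
  proof -
    define RD where "RD f \<longleftrightarrow> snd (snd (f (M' - L - 1))) = t \<and> RF (int L + 1) (int M' + 1) (N - L) x y f" for f
    have Dkey: "(S (int M') w = t \<and> B w) \<longleftrightarrow> RD (fv (N - L) (int L + 1) w)" for w
    proof -
      have "B w \<longleftrightarrow> RF (int L + 1) (int M' + 1) (N - L) x y (fv (N - L) (int L + 1) w)"
        unfolding B_def by (rule Fkey) (use LM in auto)
      moreover have "fv (N - L) (int L + 1) w (M' - L - 1) = (X (int M') w, Y (int M') w, S (int M') w)"
      proof -
        have "M' - L - 1 < N - L" using LM by simp
        then show ?thesis using LM by (simp add: fv_def of_nat_diff)
      qed
      ultimately show ?thesis unfolding RD_def by auto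
    qed
    have F1: "mu (\<lambda>w. RA L x y (pv L (int L + 1) w) \<and> RD (fv (N - L) (int L + 1) w) \<and> S (int L + 1 - 1) w = s)
          * mu (\<lambda>w. S (int L + 1 - 1) w = s)
        = mu (\<lambda>w. RA L x y (pv L (int L + 1) w) \<and> S (int L + 1 - 1) w = s)
          * mu (\<lambda>w. RD (fv (N - L) (int L + 1) w) \<and> S (int L + 1 - 1) w = s)"
      by (rule CI_gen)
    have F1': "E s t * pi s = a s * mu (\<lambda>w. S (int M') w = t \<and> B w \<and> S (int L) w = s)"
    proof -
      have ii: "int L + 1 - 1 = int L" by simp
      have Ak: "A w \<longleftrightarrow> RA L x y (pv L (int L + 1) w)" for w unfolding A_def by (rule Akey)
      have e1: "E s t = mu (\<lambda>w. RA L x y (pv L (int L + 1) w) \<and> RD (fv (N - L) (int L + 1) w) \<and> S (int L + 1 - 1) w = s)"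
        unfolding E_def ii
      proof (rule mu_cong)
        fix w show "(A w \<and> S (int L) w = s \<and> S (int M') w = t \<and> B w) = (RA L x y (pv L (int L + 1) w) \<and> RD (fv (N - L) (int L + 1) w) \<and> S (int L) w = s)"
          using Ak[of w] Dkey[of w] by blast
      qed
      have e2: "a s = mu (\<lambda>w. RA L x y (pv L (int L + 1) w) \<and> S (int L + 1 - 1) w = s)"
        unfolding a_def ii
      proof (rule mu_cong)
        fix w show "(A w \<and> S (int L) w = s) = (RA L x y (pv L (int L + 1) w) \<and> S (int L) w = s)"
          using Ak[of w] by blast
      qed
      have e3: "mu (\<lambda>w. S (int M') w = t \<and> B w \<and> S (int L) w = s) = mu (\<lambda>w. RD (fv (N - L) (int L + 1) w) \<and> S (int L + 1 - 1) w = s)"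
        unfolding ii
      proof (rule mu_cong)
        fix w show "(S (int M') w = t \<and> B w \<and> S (int L) w = s) = (RD (fv (N - L) (int L + 1) w) \<and> S (int L) w = s)"
          using Dkey[of w] by blast
      qed
      have e4: "mu (\<lambda>w. S (int L + 1 - 1) w = s) = pi s" by (simp add: pi_j)
      show ?thesis using F1 by (subst e1, subst e2, subst e3, subst e4[symmetric], assumption)
    qed
    define RP2 where "RP2 p \<longleftrightarrow> snd (snd (p (M' - L - 1))) = s" for p :: "nat \<Rightarrow> bool \<times> 'y \<times> 's"
    have Pkey: "S (int L) w = s \<longleftrightarrow> RP2 (pv (M' - L) (int M' + 1) w)" for w
    proof -
      have "pv (M' - L) (int M' + 1) w (M' - L - 1) = (X (int L + 1) w, Y (int L + 1) w, S (int L) w)"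
      proof -
        have "M' - L - 1 < M' - L" using LM by simp
        then show ?thesis using LM by (simp add: pv_def of_nat_diff add.commute)
      qed
      then show ?thesis unfolding RP2_def by simp
    qed
    have Bkey: "B w \<longleftrightarrow> RF (int M' + 1) (int M' + 1) (N - M') x y (fv (N - M') (int M' + 1) w)" for w
      unfolding B_def by (rule Fkey) (use LM in auto)
    have F2: "mu (\<lambda>w. RP2 (pv (M' - L) (int M' + 1) w) \<and> RF (int M' + 1) (int M' + 1) (N - M') x y (fv (N - M') (int M' + 1) w) \<and> S (int M' + 1 - 1) w = t)
          * mu (\<lambda>w. S (int M' + 1 - 1) w = t)
        = mu (\<lambda>w. RP2 (pv (M' - L) (int M' + 1) w) \<and> S (int M' + 1 - 1) w = t)
          * mu (\<lambda>w. RF (int M' + 1) (int M' + 1) (N - M') x y (fv (N - M') (int M' + 1) w) \<and> S (int M' + 1 - 1) w = t)"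
      by (rule CI_gen)
    have F2': "mu (\<lambda>w. S (int M') w = t \<and> B w \<and> S (int L) w = s) * pi t = (pi s * P k s t) * b t"
    proof -
      have e1: "mu (\<lambda>w. S (int M') w = t \<and> B w \<and> S (int L) w = s) = mu (\<lambda>w. RP2 (pv (M' - L) (int M' + 1) w) \<and> RF (int M' + 1) (int M' + 1) (N - M') x y (fv (N - M') (int M' + 1) w) \<and> S (int M' + 1 - 1) w = t)"
        by (rule mu_cong) (use Pkey Bkey in auto)
      have e2: "pi s * P k s t = mu (\<lambda>w. RP2 (pv (M' - L) (int M' + 1) w) \<and> S (int M' + 1 - 1) w = t)"
        unfolding qlem[of L s k t, symmetric] by (rule mu_cong) (use Pkey Mk in auto)
      have e3: "b t = mu (\<lambda>w. RF (int M' + 1) (int M' + 1) (N - M') x y (fv (N - M') (int M' + 1) w) \<and> S (int M' + 1 - 1) w = t)"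
        unfolding b_def by (rule mu_cong) (use Bkey in auto)
      have e4: "mu (\<lambda>w. S (int M' + 1 - 1) w = t) = pi t" by (simp add: pi_j)
      show ?thesis unfolding e1 e2 e3 e4[symmetric] by (rule F2)
    qed
    have "E s t * pi s * pi t = a s * (pi s * P k s t) * b t"
    proof -
      have "E s t * pi s * pi t = a s * (mu (\<lambda>w. S (int M') w = t \<and> B w \<and> S (int L) w = s) * pi t)"
        unfolding F1' by (simp only: mult.assoc)
      also have "\<dots> = a s * (pi s * P k s t) * b t" unfolding F2' by (simp only: mult.assoc)
      finally show ?thesis .
    qed
    hence Ee: "E s t * pi t = a s * P k s t * b t" using pi_ne0[of s] by (simp add: field_simps)
    have "a s * P k s t * b t \<le> a s * (psi k * pi t) * b t"
      by (intro mult_right_mono mult_left_mono psi_bound) (auto simp: a_def b_def)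
    hence "E s t * pi t \<le> (psi k * (a s * b t)) * pi t" using Ee by (simp add: algebra_simps)
    then show ?thesis using pi_pos[of t] by simp
  qed
  have "mu (\<lambda>w. A w \<and> B w) \<le> (\<Sum>s\<in>UNIV. \<Sum>t\<in>UNIV. psi k * (a s * b t))"
    unfolding sab by (intro sum_mono Ebound)
  also have "\<dots> = psi k * mu A * mu B"
  proof -
    have "(\<Sum>s\<in>UNIV. \<Sum>t\<in>UNIV. psi k * (a s * b t)) = psi k * (\<Sum>s\<in>UNIV. \<Sum>t\<in>UNIV. a s * b t)"
      by (simp only: sum_distrib_left)
    also have "\<dots> = psi k * ((\<Sum>s\<in>UNIV. a s) * (\<Sum>t\<in>UNIV. b t))"
      by (simp only: sum_product)
    finally show ?thesis by (simp only: sa sb mult.assoc)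
  qed
  finally show ?thesis by (simp add: k_def)
qed


lemma main_eq:
  fixes x :: "int \<Rightarrow> bool" and y :: "int \<Rightarrow> 'y"
  assumes LM: "1 \<le> L" "L < N"
  defines "A \<equiv> \<lambda>w. \<forall>i\<in>{1..int L}. X i w = x i \<and> Y i w = y i"
    and "B \<equiv> \<lambda>w. \<forall>i\<in>{int L + 1..int N}. X i w = x i \<and> Y i w = y i"
  shows "mu (\<lambda>w. A w \<and> B w) \<le> psi 0 * mu A * mu B"
proof -
  define a where "a s = mu (\<lambda>w. A w \<and> S (int L) w = s)" for s
  define b where "b t = mu (\<lambda>w. S (int L) w = t \<and> B w)" for t
  define E where "E s = mu (\<lambda>w. A w \<and> S (int L) w = s \<and> B w)" for s
  have mA: "ev M (\<lambda>w. A w \<and> S j w = s) \<in> sets M" for j s unfolding A_def ev_def by measurable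
  have mB: "ev M (\<lambda>w. B w \<and> S j w = s) \<in> sets M" for j s unfolding B_def ev_def by measurable
  have mAB: "ev M (\<lambda>w. (A w \<and> B w) \<and> S j w = s) \<in> sets M" for j s unfolding A_def B_def ev_def by measurable
  have sa: "mu A = (\<Sum>s\<in>UNIV. a s)" unfolding a_def by (rule sumA[OF mA])
  have sb: "mu B = (\<Sum>t\<in>UNIV. b t)"
    unfolding b_def sumA[OF mB, of "int L"] by (intro sum.cong refl mu_cong) auto
  have sab: "mu (\<lambda>w. A w \<and> B w) = (\<Sum>s\<in>UNIV. E s)"
    unfolding sumA[OF mAB, of "int L"] E_def by (intro sum.cong refl mu_cong) auto
  have ii: "int L + 1 - 1 = int L" by simp
  have Ak: "A w \<longleftrightarrow> RA L x y (pv L (int L + 1) w)" for w unfolding A_def by (rule Akey)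
  have Bk: "B w \<longleftrightarrow> RF (int L + 1) (int L + 1) (N - L) x y (fv (N - L) (int L + 1) w)" for w
    unfolding B_def by (rule Fkey) (use LM in auto)
  have Ebound: "E s \<le> psi 0 * (a s * b s)" for s
  proof -
    have F1: "mu (\<lambda>w. RA L x y (pv L (int L + 1) w) \<and> RF (int L + 1) (int L + 1) (N - L) x y (fv (N - L) (int L + 1) w) \<and> S (int L + 1 - 1) w = s)
          * mu (\<lambda>w. S (int L + 1 - 1) w = s)
        = mu (\<lambda>w. RA L x y (pv L (int L + 1) w) \<and> S (int L + 1 - 1) w = s)
          * mu (\<lambda>w. RF (int L + 1) (int L + 1) (N - L) x y (fv (N - L) (int L + 1) w) \<and> S (int L + 1 - 1) w = s)"
      by (rule CI_gen)
    have e1: "E s = mu (\<lambda>w. RA L x y (pv L (int L + 1) w) \<and> RF (int L + 1) (int L + 1) (N - L) x y (fv (N - L) (int L + 1) w) \<and> S (int L + 1 - 1) w = s)"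
      unfolding E_def ii
    proof (rule mu_cong)
      fix w show "(A w \<and> S (int L) w = s \<and> B w) = (RA L x y (pv L (int L + 1) w) \<and> RF (int L + 1) (int L + 1) (N - L) x y (fv (N - L) (int L + 1) w) \<and> S (int L) w = s)"
        using Ak[of w] Bk[of w] by blast
    qed
    have e2: "a s = mu (\<lambda>w. RA L x y (pv L (int L + 1) w) \<and> S (int L + 1 - 1) w = s)"
      unfolding a_def ii
    proof (rule mu_cong)
      fix w show "(A w \<and> S (int L) w = s) = (RA L x y (pv L (int L + 1) w) \<and> S (int L) w = s)"
        using Ak[of w] by blast
    qed
    have e3: "b s = mu (\<lambda>w. RF (int L + 1) (int L + 1) (N - L) x y (fv (N - L) (int L + 1) w) \<and> S (int L + 1 - 1) w = s)"
      unfolding b_def ii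
    proof (rule mu_cong)
      fix w show "(S (int L) w = s \<and> B w) = (RF (int L + 1) (int L + 1) (N - L) x y (fv (N - L) (int L + 1) w) \<and> S (int L) w = s)"
        using Bk[of w] by blast
    qed
    have e4: "mu (\<lambda>w. S (int L + 1 - 1) w = s) = pi s" by (simp add: pi_j)
    have Ee: "E s * pi s = a s * b s" using F1 by (subst e1, subst e2, subst e3, subst e4[symmetric], assumption)
    have "1 \<le> psi 0 * pi s" using psi_bound[of 0 s s] by simp
    hence "a s * b s * 1 \<le> a s * b s * (psi 0 * pi s)"
      by (intro mult_left_mono) (auto simp: a_def b_def)
    hence "E s * pi s \<le> (psi 0 * (a s * b s)) * pi s" using Ee by (simp add: algebra_simps)
    then show ?thesis using pi_pos[of s] by simp
  qed
  have "mu (\<lambda>w. A w \<and> B w) \<le> (\<Sum>s\<in>UNIV. psi 0 * a s * (\<Sum>t\<in>UNIV. b t))"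
    unfolding sab
  proof (rule sum_mono)
    fix s
    have "b s \<le> (\<Sum>t\<in>UNIV. b t)" by (rule member_le_sum) (auto simp: b_def)
    hence "psi 0 * a s * b s \<le> psi 0 * a s * (\<Sum>t\<in>UNIV. b t)"
      by (intro mult_left_mono mult_nonneg_nonneg psi_nonneg) (auto simp: a_def)
    then show "E s \<le> psi 0 * a s * (\<Sum>t\<in>UNIV. b t)" using Ebound[of s] by (simp add: mult.assoc)
  qed
  also have "\<dots> = psi 0 * mu A * mu B"
    unfolding sa sb by (simp only: sum_distrib_left[symmetric] sum_distrib_right[symmetric] mult.assoc)
  finally show ?thesis .
qed

end

theorem lemma4:
  fixes M :: "'w measure"
    and X :: "int \<Rightarrow> 'w \<Rightarrow> bool"
    and Y :: "int \<Rightarrow> 'w \<Rightarrow> 'y::finite"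
    and S :: "int \<Rightarrow> 'w \<Rightarrow> 's::finite"
  assumes "FAIM M X Y S"
  shows "\<exists>\<psi> :: nat \<Rightarrow> real. antimono \<psi> \<and> \<psi> \<longlonglongrightarrow> 1 \<and>
     (\<forall>N M' L. 1 \<le> L \<and> L \<le> M' \<and> M' < N \<longrightarrow>
        (\<forall>(x :: int \<Rightarrow> bool) (y :: int \<Rightarrow> 'y).
           measure M (ev M (\<lambda>w. (\<forall>i\<in>{1..int L}. X i w = x i \<and> Y i w = y i)
                              \<and> (\<forall>i\<in>{int M' + 1..int N}. X i w = x i \<and> Y i w = y i)))
         \<le> \<psi> (M' - L)
             * measure M (ev M (\<lambda>w. \<forall>i\<in>{1..int L}. X i w = x i \<and> Y i w = y i))
             * measure M (ev M (\<lambda>w. \<forall>i\<in>{int M' + 1..int N}. X i w = x i \<and> Y i w = y i))))"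
proof -
  interpret faim M X Y S using assms by unfold_locales
  show ?thesis
  proof (intro exI[of _ psi] conjI psi_anti psi_lim allI impI)
    fix N M' L :: nat and x :: "int \<Rightarrow> bool" and y :: "int \<Rightarrow> 'y"
    assume h: "1 \<le> L \<and> L \<le> M' \<and> M' < N"
    show "measure M (ev M (\<lambda>w. (\<forall>i\<in>{1..int L}. X i w = x i \<and> Y i w = y i)
                              \<and> (\<forall>i\<in>{int M' + 1..int N}. X i w = x i \<and> Y i w = y i)))
         \<le> psi (M' - L)
             * measure M (ev M (\<lambda>w. \<forall>i\<in>{1..int L}. X i w = x i \<and> Y i w = y i))
             * measure M (ev M (\<lambda>w. \<forall>i\<in>{int M' + 1..int N}. X i w = x i \<and> Y i w = y i))"
    proof (cases "M' = L")
      case True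
      then show ?thesis using main_eq[of L N x y] h by simp
    next
      case False
      then show ?thesis using main_gt[of L M' N x y] h by simp
    qed
  qed
qed


end
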